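(* Let $\gamma\in(-1,1)$ and consider the generalized Clegg integrator (GCI), i.e. the scalar reset system $\dot u_{ci}(t)=e(t)$ when $e(t)\neq 0$, and $u_{ci}(t^+)=\gamma\,u_{ci}(t)$ when $e(t)=0$, subject to the sinusoidal input $e(t)=|E_1|\sin(\omega t)$ with $\omega>0$, satisfying the open-loop stability assumption and the Zeno-free condition stated in the context. Then the steady-state output $u_{ci}(t)$ decomposes as $$u_{ci}(t)=u_i(t)+q_i(t),$$ where $u_i(t)=-|E_1/\omega|\,[\cos(\omega t)-1]$ is the base-linear (pure integrator) output and $q_i(t)$ is the $2\pi/\omega$-periodic square wave $$q_i(t)=\begin{cases}-2|E_1|\gamma(\gamma+1)^{-1}/\omega, & t\in[2k,2k+1)\cdot\pi/\omega,\\ -2|E_1|(\gamma+1)^{-1}/\omega, & t\in[2k+1,2k+2)\cdot\pi/\omega,\end{cases}\qquad k\in\mathbb{N}.$$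
   Context: A reset controller with state $x_c\in\mathbb{R}^{n_c}$, input $e$ and output $v$ is given by $\dot x_c=A_Rx_c+B_Re$ for $t\notin J$, $x_c(t^+)=A_\rho x_c(t)$ for $t\in J$, $v=C_Rx_c+D_Re$, where $J$ is the set of reset instants, i.e. the times at which the reset-triggering signal (here $e$) crosses zero. The GCI is the case $n_c=1$, $A_R=0$, $B_R=1$, $C_R=1$, $D_R=0$, $A_\rho=\gamma\in(-1,1)$. Open-loop stability assumption: $|\lambda(A_\rho e^{A_R\delta})|<1$ for all $\delta>0$ (for all eigenvalues $\lambda$), which guarantees a globally asymptotically stable $2\pi/\omega$-periodic (steady-state) solution. Zeno-free condition: the intervals $t_{i+1}-t_i$ between consecutive reset instants are bounded below by some $\sigma_{\min}>0$. *)

theory Defs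
  imports "HOL-Analysis.Analysis"
begin

definition gci_input :: "real \<Rightarrow> real \<Rightarrow> real \<Rightarrow> real" where
  "gci_input E1 \<omega> t = \<bar>E1\<bar> * sin (\<omega> * t)"

definition reset_instants :: "(real \<Rightarrow> real) \<Rightarrow> real set" where
  "reset_instants e = {t. 0 \<le> t \<and> e t = 0}"

definition zeno_free :: "(real \<Rightarrow> real) \<Rightarrow> bool" where
  "zeno_free e \<longleftrightarrow> (\<exists>\<sigma>>0. \<forall>t1\<in>reset_instants e. \<forall>t2\<in>reset_instants e.
       t1 < t2 \<longrightarrow> \<sigma> \<le> t2 - t1)"

text \<open>Solution of the GCI (A_R = 0, B_R = 1, C_R = 1, D_R = 0, A_rho = gamma) on t >= 0,
  with input e. Convention: x t is the post-reset (right-continuous) value; the pre-reset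
  value at a reset instant t is the left limit of x at t.\<close>
definition gci_solution :: "real \<Rightarrow> (real \<Rightarrow> real) \<Rightarrow> (real \<Rightarrow> real) \<Rightarrow> bool" where
  "gci_solution \<gamma> e x \<longleftrightarrow>
     (\<forall>t>0. e t \<noteq> 0 \<longrightarrow> (x has_real_derivative e t) (at t)) \<and>
     (\<forall>t\<ge>0. continuous (at_right t) x) \<and>
     (\<forall>t>0. e t = 0 \<longrightarrow> (\<exists>L. (x \<longlongrightarrow> L) (at_left t) \<and> x t = \<gamma> * L))"

definition periodic_on_nonneg :: "real \<Rightarrow> (real \<Rightarrow> real) \<Rightarrow> bool" where
  "periodic_on_nonneg T x \<longleftrightarrow> (\<forall>t\<ge>0. x (t + T) = x t)"

definition u_i :: "real \<Rightarrow> real \<Rightarrow> real \<Rightarrow> real" where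
  "u_i E1 \<omega> t = - \<bar>E1 / \<omega>\<bar> * (cos (\<omega> * t) - 1)"

text \<open>Square wave q_i (defined for t >= 0; value 0 elsewhere, never used).\<close>
definition q_i :: "real \<Rightarrow> real \<Rightarrow> real \<Rightarrow> real \<Rightarrow> real" where
  "q_i E1 \<gamma> \<omega> t =
     (if \<exists>k::nat. t \<in> {real (2*k) * pi / \<omega> ..< real (2*k+1) * pi / \<omega>}
      then - 2 * \<bar>E1\<bar> * \<gamma> / (\<gamma> + 1) / \<omega>
      else if \<exists>k::nat. t \<in> {real (2*k+1) * pi / \<omega> ..< real (2*k+2) * pi / \<omega>}
      then - 2 * \<bar>E1\<bar> / (\<gamma> + 1) / \<omega>
      else 0)"

end

theory Submission imports Defs begin

definition qv :: "real \<Rightarrow> real \<Rightarrow> real \<Rightarrow> int \<Rightarrow> real" where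
  "qv E1 \<gamma> \<omega> n = (if even n then - 2 * \<bar>E1\<bar> * \<gamma> / (\<gamma> + 1) / \<omega> else - 2 * \<bar>E1\<bar> / (\<gamma> + 1) / \<omega>)"

lemma ival_floor:
  assumes "(\<omega>::real) > 0"
  shows "t \<in> {real m * pi / \<omega> ..< real (m+1) * pi / \<omega>} \<longleftrightarrow> \<lfloor>t*\<omega>/pi\<rfloor> = int m"
proof -
  have 1: "real m * pi / \<omega> \<le> t \<longleftrightarrow> real m \<le> t*\<omega>/pi" using assms pi_gt_zero
    by (simp add: field_simps)
  have 2: "t < real (m+1) * pi / \<omega> \<longleftrightarrow> t*\<omega>/pi < real m + 1" using assms pi_gt_zero
    by (simp add: field_simps)
  show ?thesis using 1 2 by (simp add: floor_eq_iff)
qed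

lemma q_floor:
  assumes "(\<omega>::real) > 0" "t \<ge> 0"
  shows "q_i E1 \<gamma> \<omega> t = qv E1 \<gamma> \<omega> \<lfloor>t*\<omega>/pi\<rfloor>"
proof -
  have c1: "(\<exists>k::nat. t \<in> {real (2*k) * pi / \<omega> ..< real (2*k+1) * pi / \<omega>}) \<longleftrightarrow> (\<exists>k::nat. \<lfloor>t*\<omega>/pi\<rfloor> = int (2*k))"
    using ival_floor[OF assms(1), of t] by metis
  have c2: "(\<exists>k::nat. t \<in> {real (2*k+1) * pi / \<omega> ..< real (2*k+2) * pi / \<omega>}) \<longleftrightarrow> (\<exists>k::nat. \<lfloor>t*\<omega>/pi\<rfloor> = int (2*k+1))"
  proof -
    have "\<And>k::nat. real (2*k+2) = real ((2*k+1)+1)" by simp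
    then show ?thesis using ival_floor[OF assms(1), of t] by metis
  qed
  have nn: "\<lfloor>t*\<omega>/pi\<rfloor> \<ge> 0" using assms pi_gt_zero by simp
  define n where "n = \<lfloor>t*\<omega>/pi\<rfloor>"
  have e: "even n \<longleftrightarrow> (\<exists>k::nat. n = int (2*k))"
    using nn unfolding n_def by (metis evenE even_mult_iff even_of_nat_iff nonneg_int_cases zero_le_mult_iff zero_le_numeral int_ops(7) nat_mult_distrib dvd_triv_left)
  have o: "odd n \<longleftrightarrow> (\<exists>k::nat. n = int (2*k+1))"
    using nn unfolding n_def by (metis oddE even_of_nat_iff nonneg_int_cases int_ops evenE odd_add dvd_triv_left odd_one)
  show ?thesis unfolding q_i_def qv_def using c1 c2 e o n_def by auto
qed

lemma floor_ival:
  assumes "(\<omega>::real) > 0" "of_int n * pi / \<omega> \<le> s" "s < (of_int n + 1) * pi / \<omega>"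
  shows "\<lfloor>s*\<omega>/pi\<rfloor> = n"
proof -
  have 1: "of_int n \<le> s*\<omega>/pi" using assms pi_gt_zero by (simp add: field_simps)
  have 2: "s*\<omega>/pi < of_int n + 1" using assms pi_gt_zero by (simp add: field_simps)
  show ?thesis using 1 2 by (simp add: floor_eq_iff)
qed

lemma u_deriv:
  assumes "(\<omega>::real) > 0"
  shows "(u_i E1 \<omega> has_real_derivative gci_input E1 \<omega> t) (at t)"
  unfolding u_i_def[abs_def] gci_input_def
  apply (rule derivative_eq_intros refl)+
  using assms by (simp add: abs_divide)

lemma u_cont: fixes E1 \<omega> c t :: real shows "isCont (\<lambda>y. u_i E1 \<omega> y + c) t"
  unfolding u_i_def by (intro continuous_intros)

lemma const_piece:
  fixes x g g' :: "real \<Rightarrow> real"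
  assumes "a < b"
    and dx: "\<And>t. a < t \<Longrightarrow> t < b \<Longrightarrow> (x has_real_derivative g' t) (at t)"
    and dg: "\<And>t. (g has_real_derivative g' t) (at t)"
    and cx: "continuous (at_right a) x"
  shows "\<exists>c. (\<forall>t. a \<le> t \<and> t < b \<longrightarrow> x t = g t + c) \<and> (x \<longlongrightarrow> g b + c) (at_left b)"
proof -
  define h where "h = (\<lambda>t. x t - g t)"
  have dh: "(h has_real_derivative 0) (at t)" if "a < t" "t < b" for t
    using DERIV_diff[OF dx[OF that] dg[of t]] unfolding h_def by simp
  define c where "c = h ((a+b)/2)"
  have hc: "h t = c" if "a < t" "t < b" for t
  proof -
    have *: "h v = h u" if "a < u" "u \<le> v" "v < b" for u v
    proof (cases "u = v")
      case True then show ?thesis by simp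
    next
      case False
      then have "u < v" using that by simp
      have "continuous_on {u..v} h"
        using dh that proof (intro continuous_at_imp_continuous_on ballI)
        fix y assume "y \<in> {u..v}"
        then have "a < y" "y < b" using that by auto
        then show "isCont h y" using DERIV_isCont[OF dh] by blast
      qed
      then show ?thesis
        using DERIV_isconst2[OF \<open>u < v\<close>, of h v] dh that by auto
    qed
    show ?thesis
    proof (cases "t \<le> (a+b)/2")
      case True then show ?thesis unfolding c_def using *[of t "(a+b)/2"] that by simp
    next
      case False then show ?thesis unfolding c_def using *[of "(a+b)/2" t] that by simp
    qed
  qed
  have ev: "eventually (\<lambda>t. h t = c) (at_right a)"
    unfolding eventually_at_right_field using assms(1) hc by blast
  have cg: "continuous (at_right a) g"
    using DERIV_isCont[OF dg[of a]] by (simp add: continuous_at_imp_continuous_at_within)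
  have "(h \<longlongrightarrow> h a) (at_right a)"
    using cx cg unfolding h_def continuous_within by (intro tendsto_intros) auto
  moreover have "(h \<longlongrightarrow> c) (at_right a)"
    using tendsto_cong[OF ev] by simp
  ultimately have ha: "h a = c" by (intro tendsto_unique[of "at_right a"]) auto
  have 1: "\<forall>t. a \<le> t \<and> t < b \<longrightarrow> x t = g t + c"
  proof (intro allI impI)
    fix t assume "a \<le> t \<and> t < b"
    then have "h t = c" using hc ha by (cases "t = a") auto
    then show "x t = g t + c" unfolding h_def by simp
  qed
  have ev2: "eventually (\<lambda>t. g t + c = x t) (at_left b)"
    unfolding eventually_at_left_field
  proof (intro exI conjI allI impI)
    show "a < b" by fact
    fix y assume "a < y" "y < b"
    then show "g y + c = x y" using 1 by simp
  qed
  have "((\<lambda>t. g t + c) \<longlongrightarrow> g b + c) (at_left b)"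
    using DERIV_isCont[OF dg[of b]] by (intro tendsto_intros) (simp add: isCont_def filterlim_at_split)
  then have "(x \<longlongrightarrow> g b + c) (at_left b)"
    using tendsto_cong[OF ev2] by simp
  then show ?thesis using 1 by blast
qed


lemma E1_nz:
  assumes "zeno_free (gci_input E1 \<omega>)"
  shows "E1 \<noteq> 0"
proof
  assume "E1 = 0"
  then have r: "reset_instants (gci_input E1 \<omega>) = {t. 0 \<le> t}"
    unfolding reset_instants_def gci_input_def by simp
  from assms obtain \<sigma> where "\<sigma> > 0" and h: "\<forall>t1\<in>{t. 0 \<le> t}. \<forall>t2\<in>{t. (0::real) \<le> t}. t1 < t2 \<longrightarrow> \<sigma> \<le> t2 - t1"
    unfolding zeno_free_def r by blast
  from h[rule_format, of 0 "\<sigma>/2"] \<open>\<sigma> > 0\<close> show False by simp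
qed

lemma qv_shift: "qv E1 \<gamma> \<omega> (n + 2) = qv E1 \<gamma> \<omega> n"
  unfolding qv_def by simp

theorem lemma1:
  fixes \<gamma> \<omega> E1 :: real
  assumes "-1 < \<gamma>" and "\<gamma> < 1" and "0 < \<omega>"
    and "\<forall>\<delta>>0. \<bar>\<gamma> * exp (0 * \<delta>)\<bar> < 1"
    and "zeno_free (gci_input E1 \<omega>)"
  shows "gci_solution \<gamma> (gci_input E1 \<omega>) (\<lambda>t. u_i E1 \<omega> t + q_i E1 \<gamma> \<omega> t)
       \<and> periodic_on_nonneg (2 * pi / \<omega>) (\<lambda>t. u_i E1 \<omega> t + q_i E1 \<gamma> \<omega> t)
       \<and> (\<forall>x. gci_solution \<gamma> (gci_input E1 \<omega>) x \<and> periodic_on_nonneg (2 * pi / \<omega>) x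
              \<longrightarrow> (\<forall>t\<ge>0. x t = u_i E1 \<omega> t + q_i E1 \<gamma> \<omega> t))"
proof -
  have w: "\<omega> > 0" by fact
  have E1: "E1 \<noteq> 0" using E1_nz[OF assms(5)] .
  have g1: "\<gamma> + 1 \<noteq> 0" "\<gamma> + 1 > 0" using assms(1) by auto
  have pp: "pi > 0" by (rule pi_gt_zero)
  define cand where "cand = (\<lambda>t. u_i E1 \<omega> t + q_i E1 \<gamma> \<omega> t)"
  have ce: "cand t = u_i E1 \<omega> t + qv E1 \<gamma> \<omega> \<lfloor>t*\<omega>/pi\<rfloor>" if "t \<ge> 0" for t
    unfolding cand_def using q_floor[OF w that] by simp
  have fl_nn: "\<lfloor>t*\<omega>/pi\<rfloor> \<ge> 0" if "t \<ge> 0" for t using that w pp by simp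
  have fl_le: "of_int \<lfloor>t*\<omega>/pi\<rfloor> * pi / \<omega> \<le> t" for t
  proof -
    have "of_int \<lfloor>t*\<omega>/pi\<rfloor> \<le> t*\<omega>/pi" by (rule of_int_floor_le)
    moreover have "f \<le> t*\<omega>/pi \<Longrightarrow> f * pi / \<omega> \<le> t" for f using w pp by (simp add: field_simps)
    ultimately show ?thesis by blast
  qed
  have fl_lt: "t < (of_int \<lfloor>t*\<omega>/pi\<rfloor> + 1) * pi / \<omega>" for t
  proof -
    have "t*\<omega>/pi < of_int \<lfloor>t*\<omega>/pi\<rfloor> + 1" by (rule real_of_int_floor_add_one_gt)
    moreover have "t*\<omega>/pi < f \<Longrightarrow> t < f * pi / \<omega>" for f using w pp by (simp add: field_simps)
    ultimately show ?thesis by blast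
  qed
  have D: "(cand has_real_derivative gci_input E1 \<omega> t) (at t)"
    if t0: "t > 0" and ne: "gci_input E1 \<omega> t \<noteq> 0" for t
  proof -
    define n where "n = \<lfloor>t*\<omega>/pi\<rfloor>"
    have sn: "sin (\<omega> * t) \<noteq> 0" using ne unfolding gci_input_def by simp
    have "of_int n * pi / \<omega> \<noteq> t"
    proof
      assume "of_int n * pi / \<omega> = t"
      then have "\<omega> * t = of_int n * pi" using w by (simp add: field_simps)
      then show False using sn sin_zero_iff_int2 by metis
    qed
    then have lt: "of_int n * pi / \<omega> < t" using fl_le[of t] unfolding n_def by linarith
    define S where "S = {of_int n * pi / \<omega> <..< (of_int n + 1) * pi / \<omega>}"
    have tS: "t \<in> S" unfolding S_def using lt fl_lt[of t] n_def by simp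
    have nn: "n \<ge> 0" unfolding n_def using fl_nn t0 by simp
    have eq: "u_i E1 \<omega> s + qv E1 \<gamma> \<omega> n = cand s" if "s \<in> S" for s
    proof -
      have "of_int n * pi / \<omega> \<ge> 0" using nn w pp by simp
      then have s0: "s \<ge> 0" using that unfolding S_def by simp
      have "\<lfloor>s*\<omega>/pi\<rfloor> = n" using floor_ival[OF w, of n s] that unfolding S_def by simp
      then show ?thesis using ce[OF s0] by simp
    qed
    have "((\<lambda>s. u_i E1 \<omega> s + qv E1 \<gamma> \<omega> n) has_real_derivative gci_input E1 \<omega> t) (at t)"
      using u_deriv[OF w, of E1 t] by (intro derivative_eq_intros) auto
    then show ?thesis
      by (rule has_field_derivative_transform_within_open[OF _ _ tS]) (auto simp: S_def eq)
  qed
  have C: "continuous (at_right t) cand" if t0: "t \<ge> 0" for t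
  proof -
    define n where "n = \<lfloor>t*\<omega>/pi\<rfloor>"
    define b where "b = (of_int n + 1) * pi / \<omega>"
    have tb: "t < b" unfolding b_def n_def by (rule fl_lt)
    have eq: "u_i E1 \<omega> s + qv E1 \<gamma> \<omega> n = cand s" if "t \<le> s" "s < b" for s
    proof -
      have "\<lfloor>s*\<omega>/pi\<rfloor> = n" using floor_ival[OF w, of n s] that fl_le[of t]
        unfolding b_def n_def by simp
      then show ?thesis using ce[of s] that t0 by simp
    qed
    have ev: "eventually (\<lambda>s. u_i E1 \<omega> s + qv E1 \<gamma> \<omega> n = cand s) (at_right t)"
      unfolding eventually_at_right_field using tb eq by (intro exI[of _ b]) auto
    have "isCont (\<lambda>y. u_i E1 \<omega> y + qv E1 \<gamma> \<omega> n) t" by (rule u_cont)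
    then have "((\<lambda>s. u_i E1 \<omega> s + qv E1 \<gamma> \<omega> n) \<longlongrightarrow> u_i E1 \<omega> t + qv E1 \<gamma> \<omega> n) (at_right t)"
      by (simp add: isCont_def filterlim_at_split)
    then have "(cand \<longlongrightarrow> u_i E1 \<omega> t + qv E1 \<gamma> \<omega> n) (at_right t)"
      using tendsto_cong[OF ev] by simp
    moreover have "cand t = u_i E1 \<omega> t + qv E1 \<gamma> \<omega> n" using eq[of t] tb by simp
    ultimately show ?thesis unfolding continuous_within by simp
  qed
  have R: "\<exists>L. (cand \<longlongrightarrow> L) (at_left t) \<and> cand t = \<gamma> * L"
    if t0: "t > 0" and z: "gci_input E1 \<omega> t = 0" for t
  proof -
    have "sin (\<omega> * t) = 0" using z E1 unfolding gci_input_def by simp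
    then obtain i :: int where i: "\<omega> * t = of_int i * pi" using sin_zero_iff_int2 by metis
    have tt: "t = of_int i * pi / \<omega>" using i w by (simp add: field_simps)
    have "of_int i > (0::real)" using i t0 w pp
      by (metis mult_pos_pos zero_less_mult_pos2)
    then have i1: "i \<ge> 1" by simp
    have fi: "\<lfloor>t*\<omega>/pi\<rfloor> = i" using tt w pp by simp
    define a where "a = (of_int (i - 1)) * pi / \<omega>"
    have at: "a < t" unfolding a_def tt using w pp by (simp add: field_simps)
    have a0: "a \<ge> 0" unfolding a_def using i1 w pp by simp
    have eq: "u_i E1 \<omega> s + qv E1 \<gamma> \<omega> (i - 1) = cand s" if "a < s" "s < t" for s
    proof -
      have "\<lfloor>s*\<omega>/pi\<rfloor> = i - 1" using floor_ival[OF w, of "i - 1" s] that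
        unfolding a_def tt by simp
      then show ?thesis using ce[of s] that a0 by simp
    qed
    have ev: "eventually (\<lambda>s. u_i E1 \<omega> s + qv E1 \<gamma> \<omega> (i - 1) = cand s) (at_left t)"
      unfolding eventually_at_left_field using at eq by (intro exI[of _ a]) auto
    have "isCont (\<lambda>y. u_i E1 \<omega> y + qv E1 \<gamma> \<omega> (i - 1)) t" by (rule u_cont)
    then have "((\<lambda>s. u_i E1 \<omega> s + qv E1 \<gamma> \<omega> (i - 1)) \<longlongrightarrow> u_i E1 \<omega> t + qv E1 \<gamma> \<omega> (i - 1)) (at_left t)"
      by (simp add: isCont_def filterlim_at_split)
    then have lim: "(cand \<longlongrightarrow> u_i E1 \<omega> t + qv E1 \<gamma> \<omega> (i - 1)) (at_left t)"
      using tendsto_cong[OF ev] by simp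
    have ct: "cand t = u_i E1 \<omega> t + qv E1 \<gamma> \<omega> i" using ce[of t] t0 fi by simp
    have cs: "cos (\<omega> * t) = (if even i then 1 else -1)"
      using i cos_npi_int[of i] by (simp add: mult.commute)
    have ab: "\<bar>E1 / \<omega>\<bar> = \<bar>E1\<bar> / \<omega>" using w by (simp add: abs_divide)
    have "u_i E1 \<omega> t + qv E1 \<gamma> \<omega> i = \<gamma> * (u_i E1 \<omega> t + qv E1 \<gamma> \<omega> (i - 1))"
    proof (cases "even i")
      case True
      then have "odd (i - 1)" by simp
      then show ?thesis using True cs g1 unfolding u_i_def qv_def by (simp add: field_simps)
    next
      case False
      then have "even (i - 1)" by simp
      have nz: "\<omega> + \<gamma> * \<omega> \<noteq> 0" using g1 w
        by (metis add.commute distrib_left mult.commute mult_1 mult_pos_pos order_less_irrefl)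
      then show ?thesis using False cs g1 w ab unfolding u_i_def qv_def by (simp add: field_simps)
    qed
    then show ?thesis using lim ct by auto
  qed
  have P1: "gci_solution \<gamma> (gci_input E1 \<omega>) cand"
    unfolding gci_solution_def using D C R by auto
  have P2: "periodic_on_nonneg (2 * pi / \<omega>) cand"
    unfolding periodic_on_nonneg_def
  proof (intro allI impI)
    fix t :: real assume t0: "t \<ge> 0"
    have t1: "t + 2 * pi / \<omega> \<ge> 0" using t0 w pp by simp
    have f: "\<lfloor>(t + 2 * pi / \<omega>)*\<omega>/pi\<rfloor> = \<lfloor>t*\<omega>/pi\<rfloor> + 2"
    proof -
      have "(t + 2 * pi / \<omega>)*\<omega>/pi = t*\<omega>/pi + 2" using w pp by (simp add: field_simps)
      then show ?thesis by simp
    qed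
    have c: "cos (\<omega> * (t + 2 * pi / \<omega>)) = cos (\<omega> * t)"
    proof -
      have "\<omega> * (t + 2 * pi / \<omega>) = \<omega> * t + 2 * pi" using w by (simp add: field_simps)
      then show ?thesis by simp
    qed
    show "cand (t + 2 * pi / \<omega>) = cand t"
      using ce[OF t1] ce[OF t0] f c qv_shift unfolding u_i_def by simp
  qed
  have P3: "x t = cand t" if sol: "gci_solution \<gamma> (gci_input E1 \<omega>) x"
    and per: "periodic_on_nonneg (2 * pi / \<omega>) x" and t0: "t \<ge> 0" for x t
  proof -
    define T where "T = 2 * pi / \<omega>"
    have T0: "T > 0" unfolding T_def using w pp by simp
    have dx: "(x has_real_derivative gci_input E1 \<omega> t) (at t)" if "t > 0" "gci_input E1 \<omega> t \<noteq> 0" for t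
      using sol that unfolding gci_solution_def by auto
    have cx: "continuous (at_right t) x" if "t \<ge> 0" for t
      using sol that unfolding gci_solution_def by auto
    have rx: "\<exists>L. (x \<longlongrightarrow> L) (at_left t) \<and> x t = \<gamma> * L" if "t > 0" "gci_input E1 \<omega> t = 0" for t
      using sol that unfolding gci_solution_def by auto
    have ab: "\<bar>E1 / \<omega>\<bar> = \<bar>E1\<bar> / \<omega>" using w by (simp add: abs_divide)
    have gi: "gci_input E1 \<omega> t = 0" if "t = of_int k * pi / \<omega>" for t k
    proof -
      have "\<omega> * t = of_int k * pi" using that w by simp
      then show ?thesis unfolding gci_input_def by (simp add: sin_zero_iff_int2)
    qed
    define p where "p = pi / \<omega>"
    have p0: "p > 0" unfolding p_def using w pp by simp
    have "\<exists>c. (\<forall>t. 0 \<le> t \<and> t < p \<longrightarrow> x t = u_i E1 \<omega> t + c) \<and> (x \<longlongrightarrow> u_i E1 \<omega> p + c) (at_left p)"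
    proof (rule const_piece[OF p0 _ u_deriv[OF w] cx])
      fix s assume s: "0 < s" "s < p"
      then have "0 < \<omega> * s" "\<omega> * s < pi" using w unfolding p_def by (auto simp: field_simps)
      then have "sin (\<omega> * s) > 0" by (rule sin_gt_zero)
      then show "(x has_real_derivative gci_input E1 \<omega> s) (at s)"
        using dx s E1 unfolding gci_input_def by simp
    qed simp
    then obtain c0 where c0: "\<forall>t. 0 \<le> t \<and> t < p \<longrightarrow> x t = u_i E1 \<omega> t + c0"
      and l0: "(x \<longlongrightarrow> u_i E1 \<omega> p + c0) (at_left p)" by blast
    have "\<exists>c. (\<forall>t. p \<le> t \<and> t < 2*p \<longrightarrow> x t = u_i E1 \<omega> t + c) \<and> (x \<longlongrightarrow> u_i E1 \<omega> (2*p) + c) (at_left (2*p))"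
    proof (rule const_piece[OF _ _ u_deriv[OF w] cx])
      show "p < 2 * p" using p0 by simp
      fix s assume s: "p < s" "s < 2 * p"
      then have "pi < \<omega> * s" "\<omega> * s < 2 * pi" using w unfolding p_def by (auto simp: field_simps)
      then have "sin (\<omega> * s) < 0" by (rule sin_lt_zero)
      then show "(x has_real_derivative gci_input E1 \<omega> s) (at s)"
        using dx s E1 p0 unfolding gci_input_def by simp
    qed (use p0 in simp)
    then obtain c1 where c1: "\<forall>t. p \<le> t \<and> t < 2*p \<longrightarrow> x t = u_i E1 \<omega> t + c1"
      and l1: "(x \<longlongrightarrow> u_i E1 \<omega> (2*p) + c1) (at_left (2*p))" by blast
    have up: "u_i E1 \<omega> p = 2 * \<bar>E1\<bar> / \<omega>" unfolding u_i_def p_def using w ab by simp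
    have u2p: "u_i E1 \<omega> (2*p) = 0" unfolding u_i_def p_def using w by simp
    have u0: "u_i E1 \<omega> 0 = 0" unfolding u_i_def by simp
    obtain L where L: "(x \<longlongrightarrow> L) (at_left p)" "x p = \<gamma> * L"
      using rx[of p] p0 gi[of p 1] unfolding p_def by auto
    have "L = u_i E1 \<omega> p + c0" using tendsto_unique[OF _ L(1) l0] by simp
    moreover have "x p = u_i E1 \<omega> p + c1" using c1 p0 by simp
    ultimately have e1: "2 * \<bar>E1\<bar> / \<omega> + c1 = \<gamma> * (2 * \<bar>E1\<bar> / \<omega> + c0)" using L(2) up by simp
    obtain L' where L': "(x \<longlongrightarrow> L') (at_left (2*p))" "x (2*p) = \<gamma> * L'"
      using rx[of "2*p"] p0 gi[of "2*p" 2] unfolding p_def by auto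
    have "L' = c1" using tendsto_unique[OF _ L'(1) l1] u2p by simp
    moreover have "x (2*p) = x 0" using per unfolding periodic_on_nonneg_def p_def
      by (metis add_0 times_divide_eq_right order_refl)
    moreover have "x 0 = c0" using c0 p0 u0 by simp
    ultimately have e2: "c0 = \<gamma> * c1" using L'(2) by simp
    define D where "D = 2 * \<bar>E1\<bar> / \<omega>"
    have g2: "1 - \<gamma> \<noteq> 0" using assms(2) by simp
    have e1': "D + c1 = \<gamma> * (D + c0)" using e1 unfolding D_def by simp
    have "c1 * ((1 - \<gamma>) * (1 + \<gamma>)) = - D * (1 - \<gamma>)"
      using e1' e2 by (simp add: algebra_simps)
    then have "(1 - \<gamma>) * (c1 * (1 + \<gamma>)) = (1 - \<gamma>) * (- D)" by (simp add: algebra_simps)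
    then have "c1 * (1 + \<gamma>) = - D" using g2 by (metis mult_left_cancel)
    then have c1v: "c1 = - D / (\<gamma> + 1)" using g1 by (simp add: field_simps)
    then have c0v: "c0 = - D * \<gamma> / (\<gamma> + 1)" using e2 by simp
    have qv0: "qv E1 \<gamma> \<omega> 0 = c0" unfolding qv_def c0v D_def using g1 w by (simp add: field_simps)
    have qv1: "qv E1 \<gamma> \<omega> 1 = c1" unfolding qv_def c1v D_def using g1 w by (simp add: field_simps)
    have base: "x s = cand s" if "0 \<le> s" "s < T" for s
    proof (cases "s < p")
      case True
      have "\<lfloor>s*\<omega>/pi\<rfloor> = 0" using floor_ival[OF w, of 0 s] True that unfolding p_def by simp
      then show ?thesis using ce[of s] c0 True that qv0 by simp
    next
      case False
      have "\<lfloor>s*\<omega>/pi\<rfloor> = 1" using floor_ival[OF w, of 1 s] False that unfolding p_def T_def by simp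
      then show ?thesis using ce[of s] c1 False that qv1 unfolding T_def p_def by simp
    qed
    have ind: "x (s + real m * T) = x s \<and> cand (s + real m * T) = cand s" if "s \<ge> 0" for s m
    proof (induction m)
      case 0 then show ?case by simp
    next
      case (Suc m)
      have "s + real m * T \<ge> 0" using that T0 by simp
      moreover have "s + real (Suc m) * T = (s + real m * T) + 2 * pi / \<omega>" unfolding T_def by (simp add: algebra_simps add_divide_distrib)
      moreover have "x ((s + real m * T) + 2 * pi / \<omega>) = x (s + real m * T)"
        "cand ((s + real m * T) + 2 * pi / \<omega>) = cand (s + real m * T)"
        using per P2 \<open>s + real m * T \<ge> 0\<close> unfolding periodic_on_nonneg_def by blast+
      ultimately show ?case using Suc by metis
    qed
    define m where "m = nat \<lfloor>t / T\<rfloor>"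
    define s where "s = t - real m * T"
    have fl0: "\<lfloor>t / T\<rfloor> \<ge> 0" using t0 T0 by simp
    have "of_int \<lfloor>t / T\<rfloor> \<le> t / T" "t / T < of_int \<lfloor>t / T\<rfloor> + 1" by linarith+
    moreover have "real m = of_int \<lfloor>t / T\<rfloor>" unfolding m_def using fl0 by simp
    moreover have "f \<le> t / T \<Longrightarrow> f * T \<le> t" for f using T0 by (simp add: field_simps)
    moreover have "t / T < f + 1 \<Longrightarrow> t < f * T + T" for f using T0 by (simp add: field_simps)
    ultimately have "real m * T \<le> t" "t < real m * T + T" by metis+
    then have s0: "0 \<le> s" "s < T" unfolding s_def by simp_all
    have "t = s + real m * T" unfolding s_def by simp
    then show ?thesis using ind[OF s0(1), of m] base[OF s0] by simp
  qed
  show ?thesis using P1 P2 P3 unfolding cand_def by blast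
qed

end
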